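(* Let $G$ be a finite group with identity $\iota$ and let $(C_1,C_2,C_3,C_4)$ be a class vector of $G$. For $k\in\{1,2,3\}$ let $$\mathrm{Fix}_k=\{[\underline{\sigma}]\in\Sigma^i(C_1,C_2,C_3,C_4) \mid [\underline{\sigma}]^{\varphi_{4,k}}=[\underline{\sigma}]\}.$$ Then for every $k\in\{1,2,3\}$, every $\beta\in B_4$ and every $[\underline{\sigma}]\in\Sigma^i(C_1,C_2,C_3,C_4)$ we have $[\underline{\sigma}]\in \mathrm{Fix}_k$ if and only if $[\underline{\sigma}]^{\beta}\in\mathrm{Fix}_k$. In other words, the function $F_{B_4}(F_{4,k},\cdot)$ on $\Sigma^i(C_1,C_2,C_3,C_4)$, equal to $1$ on fixed points of $F_{4,k}=\langle\varphi_{4,k}\rangle$ and $-1$ otherwise, is invariant under the action of $B_4$.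
   Context: A class vector of length $m$ is a tuple $(C_1,\dots,C_m)$ of non-trivial conjugacy classes of $G$. $\Sigma(C_1,\dots,C_m)$ is the set of tuples $(\sigma_1,\dots,\sigma_m)$ with $\sigma_i\in C_i$, $\langle\sigma_1,\dots,\sigma_m\rangle=G$ and $\sigma_1\cdots\sigma_m=\iota$; $G$ acts on it by simultaneous conjugation and $\Sigma^i(C_1,\dots,C_m)$ is the set of orbits, the orbit of $(\sigma_1,\dots,\sigma_m)$ being written $[\sigma_1,\dots,\sigma_m]$. $\Sigma^i(C_1,\dots,C_m)^{sy}$ is the union of $\Sigma^i(C_{\pi(1)},\dots,C_{\pi(m)})$ over $\pi\in S_m$. The Hurwitz braid group $H_4$ is generated by $\beta_2,\beta_3,\beta_4$ with relations $\beta_2\beta_4=\beta_4\beta_2$, $\beta_2\beta_3\beta_2=\beta_3\beta_2\beta_3$, $\beta_3\beta_4\beta_3=\beta_4\beta_3\beta_4$, $\beta_2\beta_3\beta_4^2\beta_3\beta_2=1$; it acts from the right on $\Sigma^i(C_1,\dots,C_4)^{sy}$ by $[\underline{\sigma}]^{\beta_2}=[\sigma_1\sigma_2\sigma_1^{-1},\sigma_1,\sigma_3,\sigma_4]$, $[\underline{\sigma}]^{\beta_3}=[\sigma_1,\sigma_2\sigma_3\sigma_2^{-1},\sigma_2,\sigma_4]$, $[\underline{\sigma}]^{\beta_4}=[\sigma_1,\sigma_2,\sigma_3\sigma_4\sigma_3^{-1},\sigma_3]$. The pure braid group $B_4$ is generated by $\beta_{ij}=\beta_{i+1}^{-1}\cdots\beta_{j-1}^{-1}\beta_j^2\beta_{j-1}\cdots\beta_{i+1}$,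 $1\le i<j\le 4$; it maps $\Sigma^i(C_1,\dots,C_4)$ to itself. Put $\varphi_{4,1}=\beta_2\beta_4^{-1}$, $\varphi_{4,2}=(\beta_2\beta_3\beta_4)^2$, $\varphi_{4,3}=\varphi_{4,1}\varphi_{4,2}$; they act by $[\underline{\sigma}]^{\varphi_{4,1}}=[\sigma_2,\sigma_1,\sigma_1^{-1}\sigma_4\sigma_1,\sigma_1^{-1}\sigma_4^{-1}\sigma_3\sigma_4\sigma_1]$, $[\underline{\sigma}]^{\varphi_{4,2}}=[\sigma_3,\sigma_4,\sigma_1,\sigma_2]$, $[\underline{\sigma}]^{\varphi_{4,3}}=[\sigma_4,\sigma_4^{-1}\sigma_3\sigma_4,\sigma_1\sigma_2\sigma_1^{-1},\sigma_1]$. *)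

theory Defs
  imports "HOL-Algebra.Algebra"
begin

definition conj_class :: "('a, 'b) monoid_scheme \<Rightarrow> 'a \<Rightarrow> 'a set" where
  "conj_class G x = {inv\<^bsub>G\<^esub> g \<otimes>\<^bsub>G\<^esub> x \<otimes>\<^bsub>G\<^esub> g | g. g \<in> carrier G}"

definition class_vector :: "('a, 'b) monoid_scheme \<Rightarrow> nat \<Rightarrow> 'a set list \<Rightarrow> bool" where
  "class_vector G m C \<longleftrightarrow> length C = m \<and>
     (\<forall>i<m. (\<exists>x\<in>carrier G. C ! i = conj_class G x) \<and> C ! i \<noteq> {\<one>\<^bsub>G\<^esub>})"

definition tprod :: "('a, 'b) monoid_scheme \<Rightarrow> 'a list \<Rightarrow> 'a" where
  "tprod G s = foldr (\<lambda>x y. x \<otimes>\<^bsub>G\<^esub> y) s \<one>\<^bsub>G\<^esub>"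

definition Sigma_tuples :: "('a, 'b) monoid_scheme \<Rightarrow> 'a set list \<Rightarrow> 'a list set" where
  "Sigma_tuples G C = {s. length s = length C \<and> (\<forall>i<length C. s ! i \<in> C ! i)
      \<and> generate G (set s) = carrier G \<and> tprod G s = \<one>\<^bsub>G\<^esub>}"

definition tuple_orbit :: "('a, 'b) monoid_scheme \<Rightarrow> 'a list \<Rightarrow> 'a list set" where
  "tuple_orbit G s = {map (\<lambda>x. inv\<^bsub>G\<^esub> g \<otimes>\<^bsub>G\<^esub> x \<otimes>\<^bsub>G\<^esub> g) s | g. g \<in> carrier G}"

definition Sigma_in :: "('a, 'b) monoid_scheme \<Rightarrow> 'a set list \<Rightarrow> 'a list set set" where
  "Sigma_in G C = tuple_orbit G ` Sigma_tuples G C"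

(* Action of the Hurwitz generators beta_k (k = 2,3,4) and their inverses on 4-tuples
   (lists indexed 0..3 for sigma_1..sigma_4). (k, True) = beta_k, (k, False) = beta_k^{-1}. *)
fun hgen_act :: "('a, 'b) monoid_scheme \<Rightarrow> nat \<times> bool \<Rightarrow> 'a list \<Rightarrow> 'a list" where
  "hgen_act G (k, True) s =
     (if 2 \<le> k \<and> k \<le> 4 then
        s[k - 2 := s ! (k - 2) \<otimes>\<^bsub>G\<^esub> s ! (k - 1) \<otimes>\<^bsub>G\<^esub> inv\<^bsub>G\<^esub> (s ! (k - 2)),
          k - 1 := s ! (k - 2)]
      else s)"
| "hgen_act G (k, False) s =
     (if 2 \<le> k \<and> k \<le> 4 then
        s[k - 2 := s ! (k - 1),
          k - 1 := inv\<^bsub>G\<^esub> (s ! (k - 1)) \<otimes>\<^bsub>G\<^esub> s ! (k - 2) \<otimes>\<^bsub>G\<^esub> s ! (k - 1)]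
      else s)"

(* Right action of a word in the generators of H_4: apply letters left to right *)
definition hword_act :: "('a, 'b) monoid_scheme \<Rightarrow> (nat \<times> bool) list \<Rightarrow> 'a list \<Rightarrow> 'a list" where
  "hword_act G w s = foldl (\<lambda>t a. hgen_act G a t) s w"

definition inv_word :: "(nat \<times> bool) list \<Rightarrow> (nat \<times> bool) list" where
  "inv_word w = rev (map (\<lambda>(k, e). (k, \<not> e)) w)"

(* beta_ij = beta_{i+1}^{-1} ... beta_{j-1}^{-1} beta_j^2 beta_{j-1} ... beta_{i+1} *)
definition beta_pure :: "nat \<Rightarrow> nat \<Rightarrow> (nat \<times> bool) list" where
  "beta_pure i j = map (\<lambda>k. (k, False)) [i+1..<j] @ [(j, True), (j, True)]
                   @ map (\<lambda>k. (k, True)) (rev [i+1..<j])"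

(* Words representing elements of the pure braid group B_4: products of the
   generators beta_ij (1 <= i < j <= 4) and their inverses *)
definition pure_braid_words :: "(nat \<times> bool) list set" where
  "pure_braid_words = {concat (map (\<lambda>(i, j, e). if e then beta_pure i j else inv_word (beta_pure i j)) l)
      | l :: (nat \<times> nat \<times> bool) list. \<forall>(i, j, e) \<in> set l. 1 \<le> i \<and> i < j \<and> j \<le> 4}"

(* phi_{4,1} = beta_2 beta_4^{-1}, phi_{4,2} = (beta_2 beta_3 beta_4)^2, phi_{4,3} = phi_{4,1} phi_{4,2} *)
definition phi41 :: "(nat \<times> bool) list" where "phi41 = [(2, True), (4, False)]"
definition phi42 :: "(nat \<times> bool) list" where
  "phi42 = [(2, True), (3, True), (4, True), (2, True), (3, True), (4, True)]"
definition phi43 :: "(nat \<times> bool) list" where "phi43 = phi41 @ phi42"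

definition phi4 :: "nat \<Rightarrow> (nat \<times> bool) list" where
  "phi4 k = (if k = 1 then phi41 else if k = 2 then phi42 else phi43)"

definition Fix4 :: "('a, 'b) monoid_scheme \<Rightarrow> 'a set list \<Rightarrow> nat \<Rightarrow> 'a list set set" where
  "Fix4 G C k = {tuple_orbit G s | s. s \<in> Sigma_tuples G C \<and>
                   tuple_orbit G (hword_act G (phi4 k) s) = tuple_orbit G s}"

end

theory Submission
  imports Defs
begin

definition conjl :: "('a, 'b) monoid_scheme \<Rightarrow> 'a \<Rightarrow> 'a list \<Rightarrow> 'a list" where
  "conjl G g s = map (\<lambda>x. inv\<^bsub>G\<^esub> g \<otimes>\<^bsub>G\<^esub> x \<otimes>\<^bsub>G\<^esub> g) s"

definition goodl :: "('a, 'b) monoid_scheme \<Rightarrow> 'a list \<Rightarrow> bool" where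
  "goodl G s \<longleftrightarrow> length s = 4 \<and> set s \<subseteq> carrier G \<and> tprod G s = \<one>\<^bsub>G\<^esub>"

definition commw :: "('a, 'b) monoid_scheme \<Rightarrow> (nat \<times> bool) list \<Rightarrow> (nat \<times> bool) list \<Rightarrow> bool" where
  "commw G u v \<longleftrightarrow> (\<forall>s. goodl G s \<longrightarrow> (\<exists>g\<in>carrier G.
      hword_act G v (hword_act G u s) = conjl G g (hword_act G u (hword_act G v s))))"

definition gw :: "nat \<times> nat \<times> bool \<Rightarrow> (nat \<times> bool) list" where
  "gw x = (case x of (i, j, e) \<Rightarrow> if e then beta_pure i j else inv_word (beta_pure i j))"

definition dsw :: "nat \<times> bool \<Rightarrow> 'x list \<Rightarrow> 'x list" where
  "dsw x D = (if 2 \<le> fst x \<and> fst x \<le> 4 then D[fst x - 2 := D ! (fst x - 1), fst x - 1 := D ! (fst x - 2)] else D)"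

definition dword :: "(nat \<times> bool) list \<Rightarrow> 'x list \<Rightarrow> 'x list" where
  "dword w D = foldl (\<lambda>D x. dsw x D) D w"

definition inl :: "'a list \<Rightarrow> 'a set list \<Rightarrow> bool" where
  "inl s D \<longleftrightarrow> length s = 4 \<and> length D = 4 \<and> (\<forall>i<4. s ! i \<in> D ! i)"

definition ccl :: "('a, 'b) monoid_scheme \<Rightarrow> 'a set \<Rightarrow> bool" where
  "ccl G Y \<longleftrightarrow> (\<forall>x\<in>Y. \<forall>h\<in>carrier G. inv\<^bsub>G\<^esub> h \<otimes>\<^bsub>G\<^esub> x \<otimes>\<^bsub>G\<^esub> h \<in> Y)"

lemma len4: "length s = 4 \<Longrightarrow> \<exists>a b c d. s = [a,b,c,d]"
  by (auto simp: length_Suc_conv numeral_eq_Suc)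

lemma hword_Nil[simp]: "hword_act G [] s = s"
  by (simp add: hword_act_def)
lemma hword_Cons[simp]: "hword_act G (x # w) s = hword_act G w (hgen_act G x s)"
  by (simp add: hword_act_def)
lemma hword_append: "hword_act G (u @ v) s = hword_act G v (hword_act G u s)"
  by (simp add: hword_act_def)
lemma dword_Nil[simp]: "dword [] D = D"
  by (simp add: dword_def)
lemma dword_Cons[simp]: "dword (x # w) D = dword w (dsw x D)"
  by (simp add: dword_def)
lemma dword_append: "dword (u @ v) D = dword v (dword u D)"
  by (simp add: dword_def)

lemma hgen4: "hgen_act G (k, e) [a, b, c, d] =
  (if k = 2 then (if e then [a \<otimes>\<^bsub>G\<^esub> b \<otimes>\<^bsub>G\<^esub> inv\<^bsub>G\<^esub> a, a, c, d] else [b, inv\<^bsub>G\<^esub> b \<otimes>\<^bsub>G\<^esub> a \<otimes>\<^bsub>G\<^esub> b, c, d])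
   else if k = 3 then (if e then [a, b \<otimes>\<^bsub>G\<^esub> c \<otimes>\<^bsub>G\<^esub> inv\<^bsub>G\<^esub> b, b, d] else [a, c, inv\<^bsub>G\<^esub> c \<otimes>\<^bsub>G\<^esub> b \<otimes>\<^bsub>G\<^esub> c, d])
   else if k = 4 then (if e then [a, b, c \<otimes>\<^bsub>G\<^esub> d \<otimes>\<^bsub>G\<^esub> inv\<^bsub>G\<^esub> c, c] else [a, b, d, inv\<^bsub>G\<^esub> d \<otimes>\<^bsub>G\<^esub> c \<otimes>\<^bsub>G\<^esub> d])
   else [a, b, c, d])"
proof -
  have "k = 2 \<or> k = 3 \<or> k = 4 \<or> \<not> (2 \<le> k \<and> k \<le> 4)" by auto
  then show ?thesis by (cases e) (auto simp: numeral_eq_Suc)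
qed

lemma dsw4: "dsw (k, e) [A, B, C, E] =
  (if k = 2 then [B, A, C, E] else if k = 3 then [A, C, B, E] else if k = 4 then [A, B, E, C] else [A, B, C, E])"
proof -
  have "k = 2 \<or> k = 3 \<or> k = 4 \<or> \<not> (2 \<le> k \<and> k \<le> 4)" by auto
  then show ?thesis by (auto simp: dsw_def numeral_eq_Suc)
qed

lemma hgen_length[simp]: "length (hgen_act G x s) = length s"
  by (cases x, cases "snd x") auto

context group begin

lemma cancel1: "x \<in> carrier G \<Longrightarrow> y \<in> carrier G \<Longrightarrow> inv x \<otimes> (x \<otimes> y) = y"
  by (simp flip: m_assoc)
lemma cancel2: "x \<in> carrier G \<Longrightarrow> y \<in> carrier G \<Longrightarrow> x \<otimes> (inv x \<otimes> y) = y"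
  by (simp flip: m_assoc)
lemmas fg = m_assoc inv_mult_group cancel1 cancel2

lemma hgen_carrier:
  assumes "length s = 4" "set s \<subseteq> carrier G" shows "set (hgen_act G x s) \<subseteq> carrier G"
proof -
  obtain a b c d where s: "s = [a,b,c,d]" using len4[OF assms(1)] by blast
  obtain k e where x: "x = (k, e)" by (cases x)
  show ?thesis using assms(2) unfolding s x hgen4 by auto
qed

lemma hgen_tprod:
  assumes "length s = 4" "set s \<subseteq> carrier G" shows "tprod G (hgen_act G x s) = tprod G s"
proof -
  obtain a b c d where s: "s = [a,b,c,d]" using len4[OF assms(1)] by blast
  obtain k e where x: "x = (k, e)" by (cases x)
  show ?thesis using assms(2) unfolding s x hgen4 tprod_def by (auto simp: fg)
qed

lemma hgen_conj:
  assumes "length s = 4" "set s \<subseteq> carrier G" "g \<in> carrier G"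
  shows "hgen_act G x (conjl G g s) = conjl G g (hgen_act G x s)"
proof -
  obtain a b c d where s: "s = [a,b,c,d]" using len4[OF assms(1)] by blast
  obtain k e where x: "x = (k, e)" by (cases x)
  show ?thesis using assms(2,3) unfolding s x conjl_def by (simp add: hgen4 fg)
qed

lemma hgen_inv:
  assumes "length s = 4" "set s \<subseteq> carrier G"
  shows "hgen_act G (k, \<not> e) (hgen_act G (k, e) s) = s"
proof -
  obtain a b c d where s: "s = [a,b,c,d]" using len4[OF assms(1)] by blast
  have "k = 2 \<or> k = 3 \<or> k = 4 \<or> \<not> (k = 2 \<or> k = 3 \<or> k = 4)" by auto
  then show ?thesis using assms(2) unfolding s by (elim disjE; cases e) (simp_all add: hgen4 fg)
qed

lemma hgen_inj:
  assumes "length s = 4" "set s \<subseteq> carrier G" "length t = 4" "set t \<subseteq> carrier G"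
    and "hgen_act G x s = hgen_act G x t"
  shows "s = t"
proof -
  obtain k e where x: "x = (k, e)" by (cases x)
  have "hgen_act G (k, \<not> e) (hgen_act G x s) = hgen_act G (k, \<not> e) (hgen_act G x t)"
    using assms(5) by simp
  then show ?thesis using hgen_inv[OF assms(1,2)] hgen_inv[OF assms(3,4)] x by simp
qed

lemma gen_eq:
  assumes "A \<subseteq> carrier G" "B \<subseteq> carrier G" "A \<subseteq> generate G B" "B \<subseteq> generate G A"
  shows "generate G A = generate G B"
  using generate_subgroup_incl[OF assms(3) generate_is_subgroup[OF assms(2)]]
    generate_subgroup_incl[OF assms(4) generate_is_subgroup[OF assms(1)]] by blast

lemma gen_swap1:
  assumes "x \<in> carrier G" "y \<in> carrier G" "R \<subseteq> carrier G"
  shows "generate G (insert (x \<otimes> y \<otimes> inv x) (insert x R)) = generate G (insert x (insert y R))"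
proof (rule gen_eq)
  let ?A = "insert (x \<otimes> y \<otimes> inv x) (insert x R)"
  let ?B = "insert x (insert y R)"
  show "?A \<subseteq> carrier G" "?B \<subseteq> carrier G" using assms by auto
  have "x \<otimes> y \<otimes> inv x \<in> generate G ?B"
    by (intro generate.eng generate.incl generate.inv) auto
  then show "?A \<subseteq> generate G ?B" by (auto intro: generate.incl)
  have "inv x \<otimes> (x \<otimes> y \<otimes> inv x) \<otimes> x \<in> generate G ?A"
    by (intro generate.eng generate.incl generate.inv) auto
  moreover have "inv x \<otimes> (x \<otimes> y \<otimes> inv x) \<otimes> x = y" using assms by (simp add: fg)
  ultimately show "?B \<subseteq> generate G ?A" by (auto intro: generate.incl)
qed

lemma gen_swap2:
  assumes "x \<in> carrier G" "y \<in> carrier G" "R \<subseteq> carrier G"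
  shows "generate G (insert y (insert (inv y \<otimes> x \<otimes> y) R)) = generate G (insert x (insert y R))"
proof (rule gen_eq)
  let ?A = "insert y (insert (inv y \<otimes> x \<otimes> y) R)"
  let ?B = "insert x (insert y R)"
  show "?A \<subseteq> carrier G" "?B \<subseteq> carrier G" using assms by auto
  have "inv y \<otimes> x \<otimes> y \<in> generate G ?B"
    by (intro generate.eng generate.incl generate.inv) auto
  then show "?A \<subseteq> generate G ?B" by (auto intro: generate.incl)
  have "y \<otimes> (inv y \<otimes> x \<otimes> y) \<otimes> inv y \<in> generate G ?A"
    by (intro generate.eng generate.incl generate.inv) auto
  moreover have "y \<otimes> (inv y \<otimes> x \<otimes> y) \<otimes> inv y = x" using assms by (simp add: fg)
  ultimately show "?B \<subseteq> generate G ?A" by (auto intro: generate.incl)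
qed

lemma hgen_generate:
  assumes "length s = 4" "set s \<subseteq> carrier G"
  shows "generate G (set (hgen_act G x s)) = generate G (set s)"
proof -
  obtain a b c d where s: "s = [a,b,c,d]" using len4[OF assms(1)] by blast
  obtain k e where x: "x = (k, e)" by (cases x)
  have car: "a \<in> carrier G" "b \<in> carrier G" "c \<in> carrier G" "d \<in> carrier G" using assms(2) s by auto
  have "k = 2 \<or> k = 3 \<or> k = 4 \<or> \<not> (k = 2 \<or> k = 3 \<or> k = 4)" by auto
  then show ?thesis
  proof (elim disjE)
    assume k: "k = 2"
    have S: "set s = insert a (insert b {c, d})" using s by auto
    show ?thesis
    proof (cases e)
      case True
      have "set (hgen_act G x s) = insert (a \<otimes> b \<otimes> inv a) (insert a {c,d})"
        using s x k True by (auto simp: hgen4)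
      then show ?thesis using S gen_swap1[of a b "{c,d}"] car by simp
    next
      case False
      have "set (hgen_act G x s) = insert b (insert (inv b \<otimes> a \<otimes> b) {c,d})"
        using s x k False by (auto simp: hgen4)
      then show ?thesis using S gen_swap2[of a b "{c,d}"] car by simp
    qed
  next
    assume k: "k = 3"
    have S: "set s = insert b (insert c {a, d})" using s by auto
    show ?thesis
    proof (cases e)
      case True
      have "set (hgen_act G x s) = insert (b \<otimes> c \<otimes> inv b) (insert b {a,d})"
        using s x k True by (auto simp: hgen4)
      then show ?thesis using S gen_swap1[of b c "{a,d}"] car by simp
    next
      case False
      have "set (hgen_act G x s) = insert c (insert (inv c \<otimes> b \<otimes> c) {a,d})"
        using s x k False by (auto simp: hgen4)
      then show ?thesis using S gen_swap2[of b c "{a,d}"] car by simp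
    qed
  next
    assume k: "k = 4"
    have S: "set s = insert c (insert d {a, b})" using s by auto
    show ?thesis
    proof (cases e)
      case True
      have "set (hgen_act G x s) = insert (c \<otimes> d \<otimes> inv c) (insert c {a,b})"
        using s x k True by (auto simp: hgen4)
      then show ?thesis using S gen_swap1[of c d "{a,b}"] car by simp
    next
      case False
      have "set (hgen_act G x s) = insert d (insert (inv d \<otimes> c \<otimes> d) {a,b})"
        using s x k False by (auto simp: hgen4)
      then show ?thesis using S gen_swap2[of c d "{a,b}"] car by simp
    qed
  next
    assume k: "\<not> (k = 2 \<or> k = 3 \<or> k = 4)"
    then show ?thesis using s x by (simp add: hgen4)
  qed
qed

lemma ccl_1: "ccl G Y \<Longrightarrow> x \<in> Y \<Longrightarrow> h \<in> carrier G \<Longrightarrow> inv h \<otimes> x \<otimes> h \<in> Y"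
  unfolding ccl_def by blast
lemma ccl_2: "ccl G Y \<Longrightarrow> x \<in> Y \<Longrightarrow> h \<in> carrier G \<Longrightarrow> h \<otimes> x \<otimes> inv h \<in> Y"
  using ccl_1[of Y x "inv h"] by simp

lemma hgen_inl:
  assumes "inl s D" "\<forall>Y\<in>set D. ccl G Y" "set s \<subseteq> carrier G"
  shows "inl (hgen_act G x s) (dsw x D)"
proof -
  obtain a b c d where s: "s = [a,b,c,d]" using len4 assms(1) inl_def by metis
  obtain A B C E where D: "D = [A,B,C,E]" using len4 assms(1) inl_def by metis
  obtain k e where x: "x = (k, e)" by (cases x)
  have "\<forall>i<4. s ! i \<in> D ! i" using assms(1) inl_def by blast
  then have "s ! 0 \<in> D ! 0" "s ! 1 \<in> D ! 1" "s ! 2 \<in> D ! 2" "s ! 3 \<in> D ! 3" by auto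
  then have m: "a \<in> A" "b \<in> B" "c \<in> C" "d \<in> E" unfolding s D by (simp_all add: numeral_eq_Suc)
  have car: "a \<in> carrier G" "b \<in> carrier G" "c \<in> carrier G" "d \<in> carrier G" using assms(3) s by auto
  have cc: "ccl G A" "ccl G B" "ccl G C" "ccl G E" using assms(2) D by auto
  show ?thesis unfolding s D x hgen4 dsw4 inl_def
    using m car cc by (auto simp: less_Suc_eq numeral_eq_Suc intro: ccl_1 ccl_2)
qed

end

lemma dsw_len_set: "length D = 4 \<Longrightarrow> length (dsw x D) = 4 \<and> set (dsw x D) = set D"
proof -
  assume "length D = 4"
  then obtain A B C E where D: "D = [A,B,C,E]" using len4 by blast
  obtain k e where x: "x = (k, e)" by (cases x)
  show ?thesis unfolding D x dsw4 by auto
qed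

context group begin

lemma hword_carrier:
  "length s = 4 \<Longrightarrow> set s \<subseteq> carrier G \<Longrightarrow> length (hword_act G w s) = 4 \<and> set (hword_act G w s) \<subseteq> carrier G"
  by (induction w arbitrary: s) (auto simp: hgen_carrier)

lemma hword_tprod:
  "length s = 4 \<Longrightarrow> set s \<subseteq> carrier G \<Longrightarrow> tprod G (hword_act G w s) = tprod G s"
  by (induction w arbitrary: s) (auto simp: hgen_carrier hgen_tprod)

lemma hword_good: "goodl G s \<Longrightarrow> goodl G (hword_act G w s)"
  using hword_carrier hword_tprod unfolding goodl_def by metis

lemma conjl_len[simp]: "length (conjl G g s) = length s"
  by (simp add: conjl_def)

lemma conjl_carrier: "set s \<subseteq> carrier G \<Longrightarrow> g \<in> carrier G \<Longrightarrow> set (conjl G g s) \<subseteq> carrier G"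
  by (auto simp: conjl_def)

lemma conjl_one: "set s \<subseteq> carrier G \<Longrightarrow> conjl G \<one> s = s"
  by (auto simp: conjl_def intro!: map_idI)

lemma conjl_conjl: "set s \<subseteq> carrier G \<Longrightarrow> g \<in> carrier G \<Longrightarrow> h \<in> carrier G \<Longrightarrow>
   conjl G g (conjl G h s) = conjl G (h \<otimes> g) s"
  by (auto simp: conjl_def fg subset_iff)

lemma hword_conj:
  "length s = 4 \<Longrightarrow> set s \<subseteq> carrier G \<Longrightarrow> g \<in> carrier G \<Longrightarrow>
   hword_act G w (conjl G g s) = conjl G g (hword_act G w s)"
  by (induction w arbitrary: s) (auto simp: hgen_carrier hgen_conj)

lemma hword_inj:
  "length s = 4 \<Longrightarrow> set s \<subseteq> carrier G \<Longrightarrow> length t = 4 \<Longrightarrow> set t \<subseteq> carrier G \<Longrightarrow>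
   hword_act G w s = hword_act G w t \<Longrightarrow> s = t"
proof (induction w arbitrary: s t)
  case Nil then show ?case by simp
next
  case (Cons x w)
  have "hgen_act G x s = hgen_act G x t"
    using Cons.IH[of "hgen_act G x s" "hgen_act G x t"] Cons.prems by (simp add: hgen_carrier)
  then show ?case using hgen_inj Cons.prems by blast
qed

lemma hword_generate:
  "length s = 4 \<Longrightarrow> set s \<subseteq> carrier G \<Longrightarrow> generate G (set (hword_act G w s)) = generate G (set s)"
  by (induction w arbitrary: s) (auto simp: hgen_carrier hgen_generate)

lemma hword_inl:
  "inl s D \<Longrightarrow> \<forall>Y\<in>set D. ccl G Y \<Longrightarrow> set s \<subseteq> carrier G \<Longrightarrow> inl (hword_act G w s) (dword w D)"
proof (induction w arbitrary: s D)
  case Nil then show ?case by simp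
next
  case (Cons x w)
  have l: "length D = 4" using Cons.prems inl_def by blast
  have "length s = 4" using Cons.prems inl_def by blast
  then show ?case using Cons.IH[of "hgen_act G x s" "dsw x D"] Cons.prems hgen_inl hgen_carrier
      dsw_len_set[OF l] by simp
qed

lemma tuple_orbit_alt: "tuple_orbit G t = {conjl G g t | g. g \<in> carrier G}"
  by (simp add: tuple_orbit_def conjl_def)

lemma orbit_self: "set t \<subseteq> carrier G \<Longrightarrow> t \<in> tuple_orbit G t"
  unfolding tuple_orbit_alt using conjl_one by (metis (mono_tags, lifting) mem_Collect_eq one_closed)

lemma orbit_conj:
  assumes "set t \<subseteq> carrier G" "g \<in> carrier G"
  shows "tuple_orbit G (conjl G g t) = tuple_orbit G t"
proof
  show "tuple_orbit G (conjl G g t) \<subseteq> tuple_orbit G t"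
  proof
    fix u assume "u \<in> tuple_orbit G (conjl G g t)"
    then obtain h where h: "h \<in> carrier G" "u = conjl G h (conjl G g t)" unfolding tuple_orbit_alt by blast
    then have "u = conjl G (g \<otimes> h) t" using assms conjl_conjl by simp
    then show "u \<in> tuple_orbit G t" unfolding tuple_orbit_alt using h assms by blast
  qed
  show "tuple_orbit G t \<subseteq> tuple_orbit G (conjl G g t)"
  proof
    fix u assume "u \<in> tuple_orbit G t"
    then obtain h where h: "h \<in> carrier G" "u = conjl G h t" unfolding tuple_orbit_alt by blast
    have "conjl G (inv g \<otimes> h) (conjl G g t) = conjl G h t"
      using assms h by (simp add: conjl_conjl flip: m_assoc)
    then show "u \<in> tuple_orbit G (conjl G g t)" unfolding tuple_orbit_alt using h assms
      by (metis (mono_tags, lifting) inv_closed m_closed mem_Collect_eq)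
  qed
qed

lemma orbit_eqD:
  assumes "tuple_orbit G x = tuple_orbit G y" "set x \<subseteq> carrier G"
  shows "\<exists>h\<in>carrier G. x = conjl G h y"
  using orbit_self[OF assms(2)] assms(1) unfolding tuple_orbit_alt by auto

lemma comm_intro:
  assumes "\<And>a b c. a \<in> carrier G \<Longrightarrow> b \<in> carrier G \<Longrightarrow> c \<in> carrier G \<Longrightarrow>
    \<exists>g\<in>carrier G. hword_act G v (hword_act G u [a,b,c,inv c \<otimes> inv b \<otimes> inv a])
        = conjl G g (hword_act G u (hword_act G v [a,b,c,inv c \<otimes> inv b \<otimes> inv a]))"
  shows "commw G u v"
  unfolding commw_def
proof (intro allI impI)
  fix s assume gs: "goodl G s"
  then obtain a b c d where s: "s = [a,b,c,d]" using len4 unfolding goodl_def by blast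
  have car: "a \<in> carrier G" "b \<in> carrier G" "c \<in> carrier G" "d \<in> carrier G"
    using gs unfolding s goodl_def by auto
  have t: "a \<otimes> (b \<otimes> (c \<otimes> d)) = \<one>" using gs unfolding s goodl_def tprod_def using car by simp
  have "inv (a \<otimes> (b \<otimes> c)) \<otimes> (a \<otimes> (b \<otimes> (c \<otimes> d))) = d" using car by (simp add: fg)
  then have "d = inv (a \<otimes> (b \<otimes> c))" using t car by simp
  then have dd: "d = inv c \<otimes> inv b \<otimes> inv a" using car by (simp add: fg)
  obtain g where "g \<in> carrier G" "hword_act G v (hword_act G u [a,b,c,inv c \<otimes> inv b \<otimes> inv a])
        = conjl G g (hword_act G u (hword_act G v [a,b,c,inv c \<otimes> inv b \<otimes> inv a]))"
    using assms[OF car(1-3)] by blast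
  then show "\<exists>g\<in>carrier G. hword_act G v (hword_act G u s) = conjl G g (hword_act G u (hword_act G v s))"
    unfolding s dd by blast
qed

lemma comm_Nil: "commw G [] v"
  unfolding commw_def goodl_def using hword_carrier conjl_one by (metis hword_Nil one_closed)

lemma comm_append_left:
  assumes "commw G u1 v" "commw G u2 v" shows "commw G (u1 @ u2) v"
  unfolding commw_def
proof (intro allI impI)
  fix s assume gs: "goodl G s"
  obtain h where h: "h \<in> carrier G" "hword_act G v (hword_act G u1 s) = conjl G h (hword_act G u1 (hword_act G v s))"
    using assms(1) gs unfolding commw_def by blast
  obtain g where g: "g \<in> carrier G" "hword_act G v (hword_act G u2 (hword_act G u1 s)) = conjl G g (hword_act G u2 (hword_act G v (hword_act G u1 s)))"
    using assms(2) hword_good[OF gs] unfolding commw_def by blast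
  have gt: "goodl G (hword_act G u1 (hword_act G v s))" using hword_good gs by blast
  have "hword_act G v (hword_act G (u1 @ u2) s) = conjl G g (conjl G h (hword_act G u2 (hword_act G u1 (hword_act G v s))))"
    unfolding hword_append g h(2) using hword_conj gt h(1) unfolding goodl_def by simp
  also have "\<dots> = conjl G (h \<otimes> g) (hword_act G (u1 @ u2) (hword_act G v s))"
  proof -
    have "goodl G (hword_act G u2 (hword_act G u1 (hword_act G v s)))" using hword_good gs by blast
    then show ?thesis unfolding hword_append using conjl_conjl h g unfolding goodl_def by simp
  qed
  finally show "\<exists>g\<in>carrier G. hword_act G v (hword_act G (u1 @ u2) s) = conjl G g (hword_act G (u1 @ u2) (hword_act G v s))"
    using h g by blast
qed

lemma comm_append_right:
  assumes "commw G u v1" "commw G u v2" shows "commw G u (v1 @ v2)"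
  unfolding commw_def
proof (intro allI impI)
  fix s assume gs: "goodl G s"
  obtain h where h: "h \<in> carrier G" "hword_act G v1 (hword_act G u s) = conjl G h (hword_act G u (hword_act G v1 s))"
    using assms(1) gs unfolding commw_def by blast
  obtain g where g: "g \<in> carrier G" "hword_act G v2 (hword_act G u (hword_act G v1 s)) = conjl G g (hword_act G u (hword_act G v2 (hword_act G v1 s)))"
    using assms(2) hword_good[OF gs] unfolding commw_def by blast
  have gt: "goodl G (hword_act G u (hword_act G v1 s))" using hword_good gs by blast
  have "hword_act G (v1 @ v2) (hword_act G u s) = conjl G h (conjl G g (hword_act G u (hword_act G v2 (hword_act G v1 s))))"
    unfolding hword_append h(2) using hword_conj gt h(1) g unfolding goodl_def by simp
  also have "\<dots> = conjl G (g \<otimes> h) (hword_act G u (hword_act G (v1 @ v2) s))"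
  proof -
    have "goodl G (hword_act G u (hword_act G v2 (hword_act G v1 s)))" using hword_good gs by blast
    then show ?thesis unfolding hword_append using conjl_conjl h g unfolding goodl_def by simp
  qed
  finally show "\<exists>g\<in>carrier G. hword_act G (v1 @ v2) (hword_act G u s) = conjl G g (hword_act G u (hword_act G (v1 @ v2) s))"
    using h g by blast
qed

end

lemma gw_12_True: "gw (1, 2, True) = [(2, True), (2, True)]"
  by (simp add: gw_def beta_pure_def inv_word_def upt_rec)

lemma gw_12_False: "gw (1, 2, False) = [(2, False), (2, False)]"
  by (simp add: gw_def beta_pure_def inv_word_def upt_rec)

lemma gw_13_True: "gw (1, 3, True) = [(2, False), (3, True), (3, True), (2, True)]"
  by (simp add: gw_def beta_pure_def inv_word_def upt_rec)

lemma gw_13_False: "gw (1, 3, False) = [(2, False), (3, False), (3, False), (2, True)]"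
  by (simp add: gw_def beta_pure_def inv_word_def upt_rec)

lemma gw_14_True: "gw (1, 4, True) = [(2, False), (3, False), (4, True), (4, True), (3, True), (2, True)]"
  by (simp add: gw_def beta_pure_def inv_word_def upt_rec)

lemma gw_14_False: "gw (1, 4, False) = [(2, False), (3, False), (4, False), (4, False), (3, True), (2, True)]"
  by (simp add: gw_def beta_pure_def inv_word_def upt_rec)

lemma gw_23_True: "gw (2, 3, True) = [(3, True), (3, True)]"
  by (simp add: gw_def beta_pure_def inv_word_def upt_rec)

lemma gw_23_False: "gw (2, 3, False) = [(3, False), (3, False)]"
  by (simp add: gw_def beta_pure_def inv_word_def upt_rec)

lemma gw_24_True: "gw (2, 4, True) = [(3, False), (4, True), (4, True), (3, True)]"
  by (simp add: gw_def beta_pure_def inv_word_def upt_rec)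

lemma gw_24_False: "gw (2, 4, False) = [(3, False), (4, False), (4, False), (3, True)]"
  by (simp add: gw_def beta_pure_def inv_word_def upt_rec)

lemma gw_34_True: "gw (3, 4, True) = [(4, True), (4, True)]"
  by (simp add: gw_def beta_pure_def inv_word_def upt_rec)

lemma gw_34_False: "gw (3, 4, False) = [(4, False), (4, False)]"
  by (simp add: gw_def beta_pure_def inv_word_def upt_rec)

lemma dw_12_True: "dword (gw (1, 2, True)) [A, B, C, E] = [A, B, C, E]"
  unfolding gw_12_True by (simp add: dsw4)

lemma dw_12_False: "dword (gw (1, 2, False)) [A, B, C, E] = [A, B, C, E]"
  unfolding gw_12_False by (simp add: dsw4)

lemma dw_13_True: "dword (gw (1, 3, True)) [A, B, C, E] = [A, B, C, E]"
  unfolding gw_13_True by (simp add: dsw4)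

lemma dw_13_False: "dword (gw (1, 3, False)) [A, B, C, E] = [A, B, C, E]"
  unfolding gw_13_False by (simp add: dsw4)

lemma dw_14_True: "dword (gw (1, 4, True)) [A, B, C, E] = [A, B, C, E]"
  unfolding gw_14_True by (simp add: dsw4)

lemma dw_14_False: "dword (gw (1, 4, False)) [A, B, C, E] = [A, B, C, E]"
  unfolding gw_14_False by (simp add: dsw4)

lemma dw_23_True: "dword (gw (2, 3, True)) [A, B, C, E] = [A, B, C, E]"
  unfolding gw_23_True by (simp add: dsw4)

lemma dw_23_False: "dword (gw (2, 3, False)) [A, B, C, E] = [A, B, C, E]"
  unfolding gw_23_False by (simp add: dsw4)

lemma dw_24_True: "dword (gw (2, 4, True)) [A, B, C, E] = [A, B, C, E]"
  unfolding gw_24_True by (simp add: dsw4)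

lemma dw_24_False: "dword (gw (2, 4, False)) [A, B, C, E] = [A, B, C, E]"
  unfolding gw_24_False by (simp add: dsw4)

lemma dw_34_True: "dword (gw (3, 4, True)) [A, B, C, E] = [A, B, C, E]"
  unfolding gw_34_True by (simp add: dsw4)

lemma dw_34_False: "dword (gw (3, 4, False)) [A, B, C, E] = [A, B, C, E]"
  unfolding gw_34_False by (simp add: dsw4)

lemma dword_gw: "dword (gw (i, j, e)) [A, B, C, E] = [A, B, C, E]" if "1 \<le> i" "i < j" "j \<le> 4"
proof -
  have "(i, j) \<in> {(1,2),(1,3),(1,4),(2,3),(2,4),(3,4)}" using that by auto
  then show ?thesis using dw_12_True dw_12_False dw_13_True dw_13_False dw_14_True dw_14_False dw_23_True dw_23_False dw_24_True dw_24_False dw_34_True dw_34_False by (cases e) auto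
qed

lemma pure_words_alt: "w \<in> pure_braid_words \<Longrightarrow>
  \<exists>l. w = concat (map gw l) \<and> (\<forall>(i, j, e) \<in> set l. 1 \<le> i \<and> i < j \<and> j \<le> 4)"
  unfolding pure_braid_words_def
proof (elim CollectE exE conjE)
  fix l assume w: "w = concat (map (\<lambda>(i, j, e). if e then beta_pure i j else inv_word (beta_pure i j)) l)"
    and l: "\<forall>(i, j, e) \<in> set l. 1 \<le> i \<and> i < j \<and> j \<le> 4"
  have "(\<lambda>(i, j, e). if e then beta_pure i j else inv_word (beta_pure i j)) = gw"
    by (auto simp: gw_def fun_eq_iff)
  then show ?thesis using w l by auto
qed

lemma dword_pure: assumes "w \<in> pure_braid_words" "length D = 4" shows "dword w D = D"
proof -
  obtain A B C E where D: "D = [A,B,C,E]" using len4 assms(2) by blast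
  obtain l where w: "w = concat (map gw l)" and l: "\<forall>(i, j, e) \<in> set l. 1 \<le> i \<and> i < j \<and> j \<le> 4"
    using pure_words_alt[OF assms(1)] by blast
  have "dword (concat (map gw l)) [A,B,C,E] = [A,B,C,E]" using l
  proof (induction l)
    case Nil then show ?case by simp
  next
    case (Cons x l)
    obtain i j e where x: "x = (i, j, e)" by (cases x)
    then show ?case using Cons dword_gw[of i j e A B C E] by (auto simp: dword_append)
  qed
  then show ?thesis using w D by simp
qed

context group begin

lemma comm_12_True_41: "commw G (gw (1, 2, True)) phi41"
  apply (rule comm_intro)
  subgoal for a b c
    apply (rule bexI[where x="\<one>"])
    unfolding gw_12_True phi41_def hword_act_def conjl_def
    by (simp_all add: fg)
  done

lemma comm_12_False_41: "commw G (gw (1, 2, False)) phi41"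
  apply (rule comm_intro)
  subgoal for a b c
    apply (rule bexI[where x="\<one>"])
    unfolding gw_12_False phi41_def hword_act_def conjl_def
    by (simp_all add: fg)
  done

lemma comm_13_True_41: "commw G (gw (1, 3, True)) phi41"
  apply (rule comm_intro)
  subgoal for a b c
    apply (rule bexI[where x="b \<otimes> inv c \<otimes> inv b \<otimes> inv a"])
    unfolding gw_13_True phi41_def hword_act_def conjl_def
    by (simp_all add: fg)
  done

lemma comm_13_False_41: "commw G (gw (1, 3, False)) phi41"
  apply (rule comm_intro)
  subgoal for a b c
    apply (rule bexI[where x="a \<otimes> b \<otimes> c \<otimes> inv b"])
    unfolding gw_13_False phi41_def hword_act_def conjl_def
    by (simp_all add: fg)
  done

lemma comm_14_True_41: "commw G (gw (1, 4, True)) phi41"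
  apply (rule comm_intro)
  subgoal for a b c
    apply (rule bexI[where x="b \<otimes> c"])
    unfolding gw_14_True phi41_def hword_act_def conjl_def
    by (simp_all add: fg)
  done

lemma comm_14_False_41: "commw G (gw (1, 4, False)) phi41"
  apply (rule comm_intro)
  subgoal for a b c
    apply (rule bexI[where x="inv c \<otimes> inv b"])
    unfolding gw_14_False phi41_def hword_act_def conjl_def
    by (simp_all add: fg)
  done

lemma comm_23_True_41: "commw G (gw (2, 3, True)) phi41"
  apply (rule comm_intro)
  subgoal for a b c
    apply (rule bexI[where x="a \<otimes> inv c \<otimes> inv b \<otimes> inv a"])
    unfolding gw_23_True phi41_def hword_act_def conjl_def
    by (simp_all add: fg)
  done

lemma comm_23_False_41: "commw G (gw (2, 3, False)) phi41"
  apply (rule comm_intro)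
  subgoal for a b c
    apply (rule bexI[where x="a \<otimes> b \<otimes> c \<otimes> inv a"])
    unfolding gw_23_False phi41_def hword_act_def conjl_def
    by (simp_all add: fg)
  done

lemma comm_24_True_41: "commw G (gw (2, 4, True)) phi41"
  apply (rule comm_intro)
  subgoal for a b c
    apply (rule bexI[where x="a \<otimes> c"])
    unfolding gw_24_True phi41_def hword_act_def conjl_def
    by (simp_all add: fg)
  done

lemma comm_24_False_41: "commw G (gw (2, 4, False)) phi41"
  apply (rule comm_intro)
  subgoal for a b c
    apply (rule bexI[where x="inv c \<otimes> inv a"])
    unfolding gw_24_False phi41_def hword_act_def conjl_def
    by (simp_all add: fg)
  done

lemma comm_34_True_41: "commw G (gw (3, 4, True)) phi41"
  apply (rule comm_intro)
  subgoal for a b c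
    apply (rule bexI[where x="\<one>"])
    unfolding gw_34_True phi41_def hword_act_def conjl_def
    by (simp_all add: fg)
  done

lemma comm_34_False_41: "commw G (gw (3, 4, False)) phi41"
  apply (rule comm_intro)
  subgoal for a b c
    apply (rule bexI[where x="\<one>"])
    unfolding gw_34_False phi41_def hword_act_def conjl_def
    by (simp_all add: fg)
  done

lemma comm_12_True_42: "commw G (gw (1, 2, True)) phi42"
  apply (rule comm_intro)
  subgoal for a b c
    apply (rule bexI[where x="inv b \<otimes> inv a"])
    unfolding gw_12_True phi42_def hword_act_def conjl_def
    by (simp_all add: fg)
  done

lemma comm_12_False_42: "commw G (gw (1, 2, False)) phi42"
  apply (rule comm_intro)
  subgoal for a b c
    apply (rule bexI[where x="a \<otimes> b"])
    unfolding gw_12_False phi42_def hword_act_def conjl_def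
    by (simp_all add: fg)
  done

lemma comm_13_True_42: "commw G (gw (1, 3, True)) phi42"
  apply (rule comm_intro)
  subgoal for a b c
    apply (rule bexI[where x="a \<otimes> a \<otimes> b \<otimes> c \<otimes> inv b \<otimes> inv a \<otimes> b \<otimes> inv c \<otimes> inv b \<otimes> inv a"])
    unfolding gw_13_True phi42_def hword_act_def conjl_def
    by (simp_all add: fg)
  done

lemma comm_13_False_42: "commw G (gw (1, 3, False)) phi42"
  apply (rule comm_intro)
  subgoal for a b c
    apply (rule bexI[where x="a \<otimes> b \<otimes> inv c \<otimes> inv b \<otimes> inv a \<otimes> b \<otimes> c \<otimes> inv b"])
    unfolding gw_13_False phi42_def hword_act_def conjl_def
    by (simp_all add: fg)
  done

lemma comm_14_True_42: "commw G (gw (1, 4, True)) phi42"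
  apply (rule comm_intro)
  subgoal for a b c
    apply (rule bexI[where x="a \<otimes> b \<otimes> b \<otimes> c \<otimes> inv b \<otimes> inv c \<otimes> inv b \<otimes> inv a \<otimes> b \<otimes> c"])
    unfolding gw_14_True phi42_def hword_act_def conjl_def
    by (simp_all add: fg)
  done

lemma comm_14_False_42: "commw G (gw (1, 4, False)) phi42"
  apply (rule comm_intro)
  subgoal for a b c
    apply (rule bexI[where x="a \<otimes> b \<otimes> inv c \<otimes> inv b \<otimes> c \<otimes> inv a \<otimes> inv c \<otimes> inv b"])
    unfolding gw_14_False phi42_def hword_act_def conjl_def
    by (simp_all add: fg)
  done

lemma comm_23_True_42: "commw G (gw (2, 3, True)) phi42"
  apply (rule comm_intro)
  subgoal for a b c
    apply (rule bexI[where x="a \<otimes> inv c \<otimes> inv b \<otimes> inv a"])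
    unfolding gw_23_True phi42_def hword_act_def conjl_def
    by (simp_all add: fg)
  done

lemma comm_23_False_42: "commw G (gw (2, 3, False)) phi42"
  apply (rule comm_intro)
  subgoal for a b c
    apply (rule bexI[where x="a \<otimes> b \<otimes> c \<otimes> inv a"])
    unfolding gw_23_False phi42_def hword_act_def conjl_def
    by (simp_all add: fg)
  done

lemma comm_24_True_42: "commw G (gw (2, 4, True)) phi42"
  apply (rule comm_intro)
  subgoal for a b c
    apply (rule bexI[where x="a \<otimes> b \<otimes> inv a \<otimes> inv c \<otimes> inv b \<otimes> c"])
    unfolding gw_24_True phi42_def hword_act_def conjl_def
    by (simp_all add: fg)
  done

lemma comm_24_False_42: "commw G (gw (2, 4, False)) phi42"
  apply (rule comm_intro)
  subgoal for a b c
    apply (rule bexI[where x="a \<otimes> b \<otimes> c \<otimes> a \<otimes> inv b \<otimes> inv a \<otimes> inv c \<otimes> inv a"])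
    unfolding gw_24_False phi42_def hword_act_def conjl_def
    by (simp_all add: fg)
  done

lemma comm_34_True_42: "commw G (gw (3, 4, True)) phi42"
  apply (rule comm_intro)
  subgoal for a b c
    apply (rule bexI[where x="a \<otimes> b"])
    unfolding gw_34_True phi42_def hword_act_def conjl_def
    by (simp_all add: fg)
  done

lemma comm_34_False_42: "commw G (gw (3, 4, False)) phi42"
  apply (rule comm_intro)
  subgoal for a b c
    apply (rule bexI[where x="inv b \<otimes> inv a"])
    unfolding gw_34_False phi42_def hword_act_def conjl_def
    by (simp_all add: fg)
  done

lemma comm_gw: "1 \<le> i \<Longrightarrow> i < j \<Longrightarrow> j \<le> 4 \<Longrightarrow> commw G (gw (i, j, e)) phi41 \<and> commw G (gw (i, j, e)) phi42"
proof -
  assume "1 \<le> i" "i < j" "j \<le> 4"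
  then have "(i, j) \<in> {(1,2),(1,3),(1,4),(2,3),(2,4),(3,4)}" by auto
  then show ?thesis
    using comm_12_True_41 comm_12_False_41 comm_13_True_41 comm_13_False_41 comm_14_True_41 comm_14_False_41
      comm_23_True_41 comm_23_False_41 comm_24_True_41 comm_24_False_41 comm_34_True_41 comm_34_False_41
      comm_12_True_42 comm_12_False_42 comm_13_True_42 comm_13_False_42 comm_14_True_42 comm_14_False_42
      comm_23_True_42 comm_23_False_42 comm_24_True_42 comm_24_False_42 comm_34_True_42 comm_34_False_42
    by (cases e) auto
qed

lemma comm_pure: assumes "w \<in> pure_braid_words" "k \<in> {1, 2, 3 :: nat}" shows "commw G w (phi4 k)"
proof -
  obtain l where w: "w = concat (map gw l)" and l: "\<forall>(i, j, e) \<in> set l. 1 \<le> i \<and> i < j \<and> j \<le> 4"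
    using pure_words_alt[OF assms(1)] by blast
  have c: "commw G (concat (map gw l)) phi41 \<and> commw G (concat (map gw l)) phi42" using l
  proof (induction l)
    case Nil then show ?case by (simp add: comm_Nil)
  next
    case (Cons x l)
    obtain i j e where x: "x = (i, j, e)" by (cases x)
    then show ?case using Cons comm_gw[of i j e] comm_append_left by auto
  qed
  then show ?thesis using assms(2) w comm_append_right[of w phi41 phi42]
    by (auto simp: phi4_def phi43_def)
qed

lemma ccl_conj_class: "x \<in> carrier G \<Longrightarrow> ccl G (conj_class G x)"
  unfolding ccl_def
proof (intro ballI)
  fix y h assume x: "x \<in> carrier G" and y: "y \<in> conj_class G x" and h: "h \<in> carrier G"
  obtain g where g: "g \<in> carrier G" "y = inv g \<otimes> x \<otimes> g" using y unfolding conj_class_def by blast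
  have "inv h \<otimes> y \<otimes> h = inv (g \<otimes> h) \<otimes> x \<otimes> (g \<otimes> h)" using x g h by (simp add: fg)
  then show "inv h \<otimes> y \<otimes> h \<in> conj_class G x" unfolding conj_class_def using g h by blast
qed

lemma goodlD: "goodl G s \<Longrightarrow> length s = 4 \<and> set s \<subseteq> carrier G \<and> tprod G s = \<one>"
  by (simp add: goodl_def)

lemma conj_class_carrier: "x \<in> carrier G \<Longrightarrow> conj_class G x \<subseteq> carrier G"
  unfolding conj_class_def by auto

lemma sigma_good:
  assumes "class_vector G 4 C" "s \<in> Sigma_tuples G C"
  shows "goodl G s" "inl s C" "\<forall>Y\<in>set C. ccl G Y"
proof -
  have lC: "length C = 4" using assms(1) class_vector_def by blast
  have ls: "length s = 4" using assms(2) lC by (simp add: Sigma_tuples_def)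
  have mem: "\<forall>i<4. s ! i \<in> C ! i" using assms(2) lC by (simp add: Sigma_tuples_def)
  have cc: "\<forall>i<4. \<exists>x\<in>carrier G. C ! i = conj_class G x" using assms(1) class_vector_def by blast
  have "\<forall>i<4. s ! i \<in> carrier G" using mem cc conj_class_carrier by blast
  then have "set s \<subseteq> carrier G" using ls by (auto simp: in_set_conv_nth)
  then show "goodl G s" using ls assms(2) unfolding Sigma_tuples_def goodl_def by auto
  show "inl s C" using ls lC mem inl_def by auto
  show "\<forall>Y\<in>set C. ccl G Y"
  proof
    fix Y assume "Y \<in> set C"
    then obtain i where i: "i < 4" "Y = C ! i" using lC by (auto simp: in_set_conv_nth)
    then obtain x where "x \<in> carrier G" "C ! i = conj_class G x" using cc by blast
    then show "ccl G Y" using i ccl_conj_class by simp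
  qed
qed

lemma sigma_pure:
  assumes "class_vector G 4 C" "s \<in> Sigma_tuples G C" "w \<in> pure_braid_words"
  shows "hword_act G w s \<in> Sigma_tuples G C"
proof -
  note sg = sigma_good[OF assms(1,2)]
  have gs: "goodl G s" by (rule sg(1))
  have lC: "length C = 4" using assms(1) class_vector_def by blast
  have "inl (hword_act G w s) (dword w C)" using hword_inl sg gs goodlD by blast
  then have i: "inl (hword_act G w s) C" using dword_pure[OF assms(3) lC] by simp
  have g: "generate G (set (hword_act G w s)) = carrier G"
    using hword_generate gs assms(2) unfolding goodl_def Sigma_tuples_def by auto
  have "goodl G (hword_act G w s)" using hword_good gs by blast
  then show ?thesis using i g lC unfolding Sigma_tuples_def goodl_def inl_def by auto
qed

lemma fix_iff:
  assumes "t \<in> Sigma_tuples G C" "goodl G t"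
  shows "tuple_orbit G t \<in> Fix4 G C k \<longleftrightarrow> tuple_orbit G (hword_act G (phi4 k) t) = tuple_orbit G t"
proof
  assume "tuple_orbit G t \<in> Fix4 G C k"
  then obtain s' where s': "tuple_orbit G t = tuple_orbit G s'" "s' \<in> Sigma_tuples G C"
    "tuple_orbit G (hword_act G (phi4 k) s') = tuple_orbit G s'" unfolding Fix4_def by blast
  have tc: "length t = 4" "set t \<subseteq> carrier G" using assms(2) goodlD by auto
  have "\<exists>h\<in>carrier G. s' = conjl G h t"
  proof -
      have "set s' \<subseteq> generate G (set s')" by (auto intro: generate.incl)
    then have "set s' \<subseteq> carrier G" using s'(2) unfolding Sigma_tuples_def by auto
    then have "s' \<in> tuple_orbit G t" using s'(1) orbit_self by simp
    then show ?thesis unfolding tuple_orbit_alt by blast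
  qed
  then obtain h where h: "h \<in> carrier G" "s' = conjl G h t" by blast
  have "tuple_orbit G (hword_act G (phi4 k) s') = tuple_orbit G (hword_act G (phi4 k) t)"
    using h hword_conj tc orbit_conj hword_carrier by metis
  then show "tuple_orbit G (hword_act G (phi4 k) t) = tuple_orbit G t" using s' by simp
next
  assume "tuple_orbit G (hword_act G (phi4 k) t) = tuple_orbit G t"
  then show "tuple_orbit G t \<in> Fix4 G C k" using assms(1) unfolding Fix4_def by blast
qed

end

theorem theorem1:
  fixes G :: "('a, 'b) monoid_scheme" and C :: "'a set list"
  assumes "group G" and "finite (carrier G)" and "class_vector G 4 C"
    and "k \<in> {1, 2, 3 :: nat}" and "w \<in> pure_braid_words" and "s \<in> Sigma_tuples G C"
  shows "tuple_orbit G s \<in> Fix4 G C k \<longleftrightarrow> tuple_orbit G (hword_act G w s) \<in> Fix4 G C k"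
proof -
  interpret group G by (rule assms(1))
  have gs: "goodl G s" using sigma_good assms by blast
  let ?t = "hword_act G w s"
  let ?p = "phi4 k"
  have ts: "?t \<in> Sigma_tuples G C" using sigma_pure assms by blast
  have gt: "goodl G ?t" using hword_good gs by blast
  have gps: "goodl G (hword_act G ?p s)" using hword_good gs by blast
  have sc: "length s = 4" "set s \<subseteq> carrier G" using gs goodlD by auto
  have psc: "length (hword_act G ?p s) = 4" "set (hword_act G ?p s) \<subseteq> carrier G" using gps goodlD by auto
  obtain g where g: "g \<in> carrier G" "hword_act G ?p ?t = conjl G g (hword_act G w (hword_act G ?p s))"
    using comm_pure[OF assms(5,4)] gs unfolding commw_def by blast
  have bpc: "set (hword_act G w (hword_act G ?p s)) \<subseteq> carrier G" using hword_good gps goodlD by blast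
  have O: "tuple_orbit G (hword_act G ?p ?t) = tuple_orbit G (hword_act G w (hword_act G ?p s))"
    using g orbit_conj bpc by simp
  have "tuple_orbit G (hword_act G ?p s) = tuple_orbit G s \<longleftrightarrow>
        tuple_orbit G (hword_act G w (hword_act G ?p s)) = tuple_orbit G ?t"
  proof
    assume a: "tuple_orbit G (hword_act G ?p s) = tuple_orbit G s"
    obtain h where h: "h \<in> carrier G" "hword_act G ?p s = conjl G h s" using orbit_eqD[OF a psc(2)] by blast
    have "hword_act G w (hword_act G ?p s) = conjl G h ?t" using h hword_conj sc by simp
    then show "tuple_orbit G (hword_act G w (hword_act G ?p s)) = tuple_orbit G ?t"
      using orbit_conj h gt goodlD by simp
  next
    assume a: "tuple_orbit G (hword_act G w (hword_act G ?p s)) = tuple_orbit G ?t"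
    obtain h where h: "h \<in> carrier G" "hword_act G w (hword_act G ?p s) = conjl G h ?t"
      using orbit_eqD[OF a bpc] by blast
    then have "hword_act G w (hword_act G ?p s) = hword_act G w (conjl G h s)" using hword_conj sc by simp
    then have "hword_act G ?p s = conjl G h s"
      using hword_inj psc sc conjl_carrier h(1) by (metis conjl_len)
    then show "tuple_orbit G (hword_act G ?p s) = tuple_orbit G s" using orbit_conj h sc by simp
  qed
  then show ?thesis using fix_iff[OF assms(6) gs] fix_iff[OF ts gt] O by simp
qed

end
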